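(* Consider the over-the-air federated learning system described in the context, with the correlated perturbation mechanism, observed by the adversary over $T$ rounds. Suppose that for every round $t\in\{1,\dots,T\}$, every sample-wise gradient satisfies $\|\nabla f(\mathbf{w}^{(t)},\boldsymbol{\mu},\nu)\|\le\gamma^{(t)}$ for all possible data points $(\boldsymbol{\mu},\nu)$. Let $\rho^{(t)}_{\max}=\max_k|\rho^{(t)}_k|$ and let $C(x)=\sqrt{\pi}\,x\,e^{x^2}$ for $x>0$ (which is strictly increasing on $(0,\infty)$, with inverse $C^{-1}$). If $$\sum_{t=1}^{T}\left(\frac{2\gamma^{(t)}}{m^{(t)}}\sqrt{\eta^{(t)}}\,\rho^{(t)}_{\max}\right)^2<\left(\sqrt{\epsilon+\big(C^{-1}(1/\delta)\big)^2}-C^{-1}(1/\delta)\right)^2=:\mathcal{R}_{dp}(\epsilon,\delta),$$ then the mechanism is $(\epsilon,\delta)$-differentially private with respect to the adversary's observations $\mathbf{y}_a=\{\mathbf{y}_a^{(t)}\}_{t=1}^T$, i.e. for every pair of neighboring global datasets $\mathcal{D},\mathcal{D}'$, $\mathrm{P}\big(|\mathcal{L}_{\mathcal{D},\mathcal{D}'}(\mathbf{y}_a)|\le\epsilon\big)\ge 1-\delta$.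
   Context: System: $K$ users, each with a local dataset $\mathcal{D}_k$ of $D$ data points $(\boldsymbol{\mu},\nu)$; global dataset $\mathcal{D}=\cup_k\mathcal{D}_k$. A model $\mathbf{w}\in\mathbb{R}^d$ is trained over rounds $t=1,\dots,T$; at round $t$ with current model $\mathbf{w}^{(t)}$, user $k$ computes the local gradient $\nabla F_k(\mathbf{w}^{(t)},\mathcal{D}_k)=\sum_{(\boldsymbol{\mu},\nu)\in\mathcal{D}_k}\nabla f(\mathbf{w}^{(t)},\boldsymbol{\mu},\nu)$ for a sample-wise loss $f$. User $k$ transmits $\mathbf{x}_k^{(t)}=\frac{\sqrt{\eta^{(t)}}}{h_k^{(t)}}\big(\nabla F_k(\mathbf{w}^{(t)},\mathcal{D}_k)+\mathbf{n}_k^{(t)}\big)$, where $h_k^{(t)}\in\mathbb{C}$ is its channel to the server and $\eta^{(t)}>0$ is a common power scaling factor. The perturbations are generated as the rows of $\mathbf{N}^{(t)}=(\mathbf{R}^{(t)})^{1/2}\mathbf{W}^{(t)}$, where $\mathbf{W}^{(t)}$ is a $K\times d$ matrix of i.i.d. $\mathcal{CN}(0,1)$ entries, independent across rounds, and $\mathbf{R}^{(t)}\succeq0$ is a $K\times K$ covariance matrix with $\sum_{k,j}\mathbf{R}^{(t)}_{k,j}=0$ (so $\sum_k\mathbf{n}_k^{(t)}=\mathbf{0}$). With $g_k^{(t)}\in\mathbb{C}$ the channel from user $k$ to the adversary and $\rho_k^{(t)}=g_k^{(t)}/h_k^{(t)}$, $\boldsymbol{\rho}^{(t)}=(\rho_1^{(t)},\dots,\rho_K^{(t)})^T$,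 the adversary receives $\mathbf{y}_a^{(t)}=\sqrt{\eta^{(t)}}\sum_k\rho_k^{(t)}\nabla F_k(\mathbf{w}^{(t)},\mathcal{D}_k)+\mathbf{r}^{(t)}$, where the effective noise $\mathbf{r}^{(t)}=\sqrt{\eta^{(t)}}\big((\boldsymbol{\rho}^{(t)})^T(\mathbf{R}^{(t)})^{1/2}\mathbf{W}^{(t)}\big)^T+\mathbf{z}_a^{(t)}$, with $\mathbf{z}_a^{(t)}\sim\mathcal{CN}(0,N_a\mathbf{I}_d)$ i.i.d. across rounds, is distributed as $\mathcal{CN}(0,(m^{(t)})^2\mathbf{I}_d)$, independent across rounds, with $(m^{(t)})^2=\eta^{(t)}(\boldsymbol{\rho}^{(t)})^T\mathbf{R}^{(t)}(\boldsymbol{\rho}^{(t)})^*+N_a$. Two global datasets $\mathcal{D}=\cup_k\mathcal{D}_k$, $\mathcal{D}'=\cup_k\mathcal{D}'_k$ are neighboring if for exactly one index $l$ the local datasets $\mathcal{D}_l,\mathcal{D}'_l$ differ in exactly one sample and $\mathcal{D}_k=\mathcal{D}'_k$ for $k\ne l$. The privacy loss is $\mathcal{L}_{\mathcal{D},\mathcal{D}'}(\mathbf{y}_a)=\ln\prod_{t=1}^T\frac{\mathrm{P}(\mathbf{y}_a^{(t)}\mid\mathbf{y}_a^{(1)},\dots,\mathbf{y}_a^{(t-1)},\mathcal{D})}{\mathrm{P}(\mathbf{y}_a^{(t)}\mid\mathbf{y}_a^{(1)},\dots,\mathbf{y}_a^{(t-1)},\mathcal{D}')}$, where the only randomness is the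 effective noise (the gradients at each round are treated as deterministic given the past). A mechanism is $(\epsilon,\delta)$-differentially private ($\epsilon\ge0$, $\delta\in[0,1]$) if $\mathrm{P}(|\mathcal{L}_{\mathcal{D},\mathcal{D}'}(\mathbf{y}_a)|\le\epsilon)\ge1-\delta$ for all neighboring $\mathcal{D},\mathcal{D}'$. *)

theory Defs
  imports "HOL-Probability.Probability" "HOL-Library.Multiset"
begin

text \<open>Density of the circularly-symmetric complex Gaussian CN(0, s^2 I_d) on complex^'d
  (with respect to Lebesgue measure on complex^'d, i.e. R^(2d)).\<close>
definition cgauss_density :: "real \<Rightarrow> complex^'d \<Rightarrow> real" where
  "cgauss_density s x = (1 / (pi * s\<^sup>2)) ^ CARD('d) * exp (- (norm x)\<^sup>2 / s\<^sup>2)"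

definition cvec :: "real^'d \<Rightarrow> complex^'d" where
  "cvec v = (\<chi> i. complex_of_real (v $ i))"

definition local_grad :: "(real^'d \<Rightarrow> 'z \<Rightarrow> real^'d) \<Rightarrow> real^'d \<Rightarrow> 'z multiset \<Rightarrow> real^'d" where
  "local_grad gradf w Dk = sum_mset (image_mset (gradf w) Dk)"

definition ch_ratio :: "(nat \<Rightarrow> 'k \<Rightarrow> complex) \<Rightarrow> (nat \<Rightarrow> 'k \<Rightarrow> complex) \<Rightarrow> nat \<Rightarrow> 'k \<Rightarrow> complex" where
  "ch_ratio g h t k = g t k / h t k"

definition rho_max :: "('k::finite \<Rightarrow> complex) \<Rightarrow> real" where
  "rho_max rho = Max ((\<lambda>k. cmod (rho k)) ` UNIV)"

definition quad_form :: "('k::finite \<Rightarrow> complex) \<Rightarrow> ('k \<Rightarrow> 'k \<Rightarrow> complex) \<Rightarrow> complex" where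
  "quad_form rho R = (\<Sum>k\<in>UNIV. \<Sum>j\<in>UNIV. rho k * R k j * cnj (rho j))"

definition psd_matrix :: "('k::finite \<Rightarrow> 'k \<Rightarrow> complex) \<Rightarrow> bool" where
  "psd_matrix R \<longleftrightarrow> (\<forall>v::'k \<Rightarrow> complex.
      Im (\<Sum>k\<in>UNIV. \<Sum>j\<in>UNIV. cnj (v k) * R k j * v j) = 0 \<and>
      0 \<le> Re (\<Sum>k\<in>UNIV. \<Sum>j\<in>UNIV. cnj (v k) * R k j * v j))"

definition eff_std :: "real \<Rightarrow> ('k::finite \<Rightarrow> complex) \<Rightarrow> ('k \<Rightarrow> 'k \<Rightarrow> complex) \<Rightarrow> real \<Rightarrow> real" where
  "eff_std eta rho R Na = sqrt (eta * Re (quad_form rho R) + Na)"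

text \<open>Noise-free part of the adversary's observation:
  sqrt(eta) * sum_k rho_k * grad F_k(w, D_k).\<close>
definition adv_mean :: "real \<Rightarrow> ('k::finite \<Rightarrow> complex) \<Rightarrow> (real^'d \<Rightarrow> 'z \<Rightarrow> real^'d)
    \<Rightarrow> real^'d \<Rightarrow> ('k \<Rightarrow> 'z multiset) \<Rightarrow> complex^'d" where
  "adv_mean eta rho gradf w Ds =
     complex_of_real (sqrt eta) *s (\<Sum>k\<in>UNIV. rho k *s cvec (local_grad gradf w (Ds k)))"

definition neighboring :: "nat \<Rightarrow> ('k \<Rightarrow> 'z multiset) \<Rightarrow> ('k \<Rightarrow> 'z multiset) \<Rightarrow> bool" where
  "neighboring D Ds Ds' \<longleftrightarrow>
     (\<forall>k. size (Ds k) = D \<and> size (Ds' k) = D) \<and>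
     (\<exists>l. (\<forall>k. k \<noteq> l \<longrightarrow> Ds k = Ds' k) \<and>
          (\<exists>M s s'. s \<noteq> s' \<and> Ds l = add_mset s M \<and> Ds' l = add_mset s' M))"

definition privacy_loss :: "nat \<Rightarrow> (nat \<Rightarrow> real) \<Rightarrow> (nat \<Rightarrow> complex^'d) \<Rightarrow> (nat \<Rightarrow> complex^'d)
    \<Rightarrow> (nat \<Rightarrow> complex^'d) \<Rightarrow> real" where
  "privacy_loss T m mu mu' y =
     ln (\<Prod>t\<in>{1..T}. cgauss_density (m t) (y t - mu t) / cgauss_density (m t) (y t - mu' t))"

definition ota_dp :: "'w measure \<Rightarrow> nat \<Rightarrow> nat \<Rightarrow> (nat \<Rightarrow> real) \<Rightarrow> (nat \<Rightarrow> 'w \<Rightarrow> complex^'d)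
    \<Rightarrow> (nat \<Rightarrow> ('k \<Rightarrow> 'z multiset) \<Rightarrow> complex^'d) \<Rightarrow> real \<Rightarrow> real \<Rightarrow> bool" where
  "ota_dp M T D m r mean eps delta \<longleftrightarrow>
     (\<forall>Ds Ds'. neighboring D Ds Ds' \<longrightarrow>
        measure M {\<omega> \<in> space M.
          \<bar>privacy_loss T m (\<lambda>t. mean t Ds) (\<lambda>t. mean t Ds') (\<lambda>t. mean t Ds + r t \<omega>)\<bar> \<le> eps}
        \<ge> 1 - delta)"

definition Cfun :: "real \<Rightarrow> real" where
  "Cfun x = sqrt pi * x * exp (x\<^sup>2)"

definition Cinv :: "real \<Rightarrow> real" where
  "Cinv y = (THE x. 0 < x \<and> Cfun x = y)"

definition R_dp :: "real \<Rightarrow> real \<Rightarrow> real" where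
  "R_dp eps delta = (sqrt (eps + (Cinv (1 / delta))\<^sup>2) - Cinv (1 / delta))\<^sup>2"

end

theory Submission
  imports Defs "HOL-Real_Asymp.Real_Asymp"
begin


lemma normal_tail_bound:
  fixes \<sigma> a :: real
  assumes s: "0 < \<sigma>" and a: "0 < a"
  shows "(\<integral>\<^sup>+x. ennreal (normal_density 0 \<sigma> x) * indicator {a<..} x \<partial>lborel)
          \<le> ennreal (\<sigma>\<^sup>2 / a * normal_density 0 \<sigma> a)"
proof -
  have "(\<integral>\<^sup>+x. ennreal (normal_density 0 \<sigma> x) * indicator {a<..} x \<partial>lborel)
      \<le> (\<integral>\<^sup>+x. ennreal (x * normal_density 0 \<sigma> x / a) * indicator {a..} x \<partial>lborel)"
  proof (intro nn_integral_mono)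
    fix x
    show "ennreal (normal_density 0 \<sigma> x) * indicator {a<..} x
        \<le> ennreal (x * normal_density 0 \<sigma> x / a) * indicator {a..} x"
    proof (cases "a < x")
      case True
      have "normal_density 0 \<sigma> x \<le> x * normal_density 0 \<sigma> x / a"
        using True a by (simp add: field_simps mult_right_mono)
      then show ?thesis using True by (simp add: indicator_def ennreal_leI)
    qed (auto simp: indicator_def)
  qed
  also have "\<dots> = ennreal (0 - (- \<sigma>\<^sup>2 / a * normal_density 0 \<sigma> a))"
  proof (rule nn_integral_FTC_atLeast[where F="\<lambda>x. - \<sigma>\<^sup>2 / a * normal_density 0 \<sigma> x"])
    show "(\<lambda>x. x * normal_density 0 \<sigma> x / a) \<in> borel_measurable borel" by measurable
    fix x assume "a \<le> x"
    then show "0 \<le> x * normal_density 0 \<sigma> x / a" using a by simp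
    show "((\<lambda>x. - \<sigma>\<^sup>2 / a * normal_density 0 \<sigma> x) has_real_derivative x * normal_density 0 \<sigma> x / a) (at x)"
      unfolding normal_density_def
      using s a by (auto intro!: derivative_eq_intros simp: field_simps power2_eq_square)
  next
    show "((\<lambda>x. - \<sigma>\<^sup>2 / a * normal_density 0 \<sigma> x) \<longlongrightarrow> 0) at_top"
      unfolding normal_density_def using s by real_asymp
  qed
  finally show ?thesis by simp
qed



lemma Cfun_strict_mono:
  assumes "0 < x" "x < y"
  shows "Cfun x < Cfun y"
proof -
  have "exp (x\<^sup>2) < exp (y\<^sup>2)" using assms by (simp add: power_strict_mono)
  then have "x * exp (x\<^sup>2) < y * exp (y\<^sup>2)"
    using assms by (intro mult_strict_mono) auto
  then show ?thesis unfolding Cfun_def by (simp add: mult.assoc)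
qed

lemma Cinv_prop:
  fixes y :: real
  assumes y: "1 \<le> y"
  shows "0 < Cinv y \<and> Cfun (Cinv y) = y"
proof -
  have cont: "continuous_on {0..y} Cfun" unfolding Cfun_def by (intro continuous_intros)
  have "1 \<le> sqrt pi" using pi_gt3 by (simp add: real_le_rsqrt)
  moreover have "1 \<le> exp (y\<^sup>2)" by simp
  ultimately have "1 \<le> sqrt pi * exp (y\<^sup>2)" using mult_mono[of 1 "sqrt pi" 1 "exp (y\<^sup>2)"] by simp
  then have "y * 1 \<le> y * (sqrt pi * exp (y\<^sup>2))" using y by (intro mult_left_mono) auto
  then have "y \<le> Cfun y" unfolding Cfun_def by (simp add: ac_simps)
  moreover have "Cfun 0 \<le> y" using y by (simp add: Cfun_def)
  ultimately obtain x where x: "0 \<le> x" "x \<le> y" "Cfun x = y"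
    using IVT'[of Cfun 0 y y] cont y by auto
  have "x \<noteq> 0" proof assume "x = 0" then have "Cfun x = 0" by (simp add: Cfun_def)
    then show False using x y by simp qed
  then have x0: "0 < x" using x by simp
  have uniq: "\<And>z. 0 < z \<and> Cfun z = y \<Longrightarrow> z = x"
  proof -
    fix z assume z: "0 < z \<and> Cfun z = y"
    show "z = x"
    proof (rule ccontr)
      assume "z \<noteq> x"
      then consider "z < x" | "x < z" by linarith
      then show False
      proof cases
        case 1 then have "Cfun z < Cfun x" using z by (intro Cfun_strict_mono) auto
        then show False using z x by simp
      next
        case 2 then have "Cfun x < Cfun z" using x0 by (intro Cfun_strict_mono) auto
        then show False using z x by simp
      qed
    qed
  qed
  have "Cinv y = x" unfolding Cinv_def
  proof (rule the_equality)
    show "0 < x \<and> Cfun x = y" using x x0 by simp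
  qed (rule uniq)
  then show ?thesis using x x0 by simp
qed



lemma PiM_density_normal:
  fixes I :: "'b set"
  assumes fin: "finite I" and s: "0 < \<sigma>"
  shows "density (\<Pi>\<^sub>M b\<in>I. lborel) (\<lambda>g. \<Prod>b\<in>I. ennreal (normal_density 0 \<sigma> (g b)))
     = (\<Pi>\<^sub>M b\<in>I. density lborel (\<lambda>x. ennreal (normal_density 0 \<sigma> x)))"
proof -
  let ?N = "\<lambda>b::'b. density lborel (\<lambda>x. ennreal (normal_density 0 \<sigma> x))"
  interpret N: product_sigma_finite ?N
    unfolding product_sigma_finite_def
    using prob_space_imp_sigma_finite[OF prob_space_normal_density] s by blast
  interpret L: product_sigma_finite "\<lambda>_::'b. lborel :: real measure"
    unfolding product_sigma_finite_def by (auto intro: lborel.sigma_finite_measure_axioms)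
  show ?thesis
  proof (rule N.PiM_eqI[OF fin])
    show "sets (density (\<Pi>\<^sub>M b\<in>I. lborel) (\<lambda>g. \<Prod>b\<in>I. ennreal (normal_density 0 \<sigma> (g b)))) = sets (\<Pi>\<^sub>M b\<in>I. ?N b)"
      unfolding sets_density by (intro sets_PiM_cong) auto
    fix A assume A: "\<And>i. i \<in> I \<Longrightarrow> A i \<in> sets (?N i)"
    then have A': "\<And>i. i \<in> I \<Longrightarrow> A i \<in> sets borel" by simp
    have "emeasure (density (\<Pi>\<^sub>M b\<in>I. lborel) (\<lambda>g. \<Prod>b\<in>I. ennreal (normal_density 0 \<sigma> (g b)))) (Pi\<^sub>E I A)
       = (\<integral>\<^sup>+g. (\<Prod>b\<in>I. ennreal (normal_density 0 \<sigma> (g b))) * indicator (Pi\<^sub>E I A) g \<partial>(\<Pi>\<^sub>M b\<in>I. lborel))"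
      using A' by (intro emeasure_density) (measurable, auto intro!: sets_PiM_I_finite fin)
    also have "\<dots> = (\<integral>\<^sup>+g. (\<Prod>b\<in>I. ennreal (normal_density 0 \<sigma> (g b)) * indicator (A b) (g b)) \<partial>(\<Pi>\<^sub>M b\<in>I. lborel))"
    proof (intro nn_integral_cong)
      fix g assume "g \<in> space (\<Pi>\<^sub>M b\<in>I. (lborel::real measure))"
      then have "g \<in> extensional I" by (simp add: space_PiM PiE_def)
      then have "indicator (Pi\<^sub>E I A) g = (\<Prod>b\<in>I. indicator (A b) (g b) :: ennreal)"
      proof (cases "g \<in> Pi\<^sub>E I A")
        case True then show ?thesis using fin by (auto simp: indicator_def PiE_def Pi_def intro!: prod.neutral)
      next
        case False
        with \<open>g \<in> extensional I\<close> obtain b where "b \<in> I" "g b \<notin> A b" by (auto simp: PiE_def Pi_def)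
        then show ?thesis using False fin by (auto simp: indicator_def intro!: prod_zero)
      qed
      then show "(\<Prod>b\<in>I. ennreal (normal_density 0 \<sigma> (g b))) * indicator (Pi\<^sub>E I A) g
          = (\<Prod>b\<in>I. ennreal (normal_density 0 \<sigma> (g b)) * indicator (A b) (g b))"
        by (simp add: prod.distrib)
    qed
    also have "\<dots> = (\<Prod>b\<in>I. (\<integral>\<^sup>+x. ennreal (normal_density 0 \<sigma> x) * indicator (A b) x \<partial>lborel))"
      using A' by (intro L.product_nn_integral_prod fin) auto
    also have "\<dots> = (\<Prod>b\<in>I. emeasure (?N b) (A b))"
      using A' by (intro prod.cong refl) (simp add: emeasure_density)
    finally show "emeasure (density (\<Pi>\<^sub>M b\<in>I. lborel) (\<lambda>g. \<Prod>b\<in>I. ennreal (normal_density 0 \<sigma> (g b)))) (Pi\<^sub>E I A)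
       = (\<Prod>b\<in>I. emeasure (?N b) (A b))" .
  qed
qed



lemma (in prob_space) gauss_coords:
  fixes X :: "'a \<Rightarrow> 'b::euclidean_space"
  assumes s: "0 < \<sigma>"
  and X: "distributed M lborel X (\<lambda>x. ennreal (\<Prod>b\<in>Basis. normal_density 0 \<sigma> (x \<bullet> b)))"
  shows "indep_vars (\<lambda>_. borel) (\<lambda>b \<omega>. X \<omega> \<bullet> b) Basis \<and>
    (\<forall>b\<in>Basis. distributed M lborel (\<lambda>\<omega>. X \<omega> \<bullet> b) (\<lambda>x. ennreal (normal_density 0 \<sigma> x)))"
proof -
  define P where "P = (\<Pi>\<^sub>M b\<in>(Basis::'b set). (lborel::real measure))"
  define N where "N = (\<Pi>\<^sub>M b\<in>(Basis::'b set). density lborel (\<lambda>x. ennreal (normal_density 0 \<sigma> x)))"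
  define \<phi> where "\<phi> = (\<lambda>f. \<Sum>b\<in>(Basis::'b set). f b *\<^sub>R b)"
  define \<psi> where "\<psi> = (\<lambda>x::'b. \<lambda>b\<in>Basis. x \<bullet> b)"
  define f where "f = (\<lambda>x::'b. ennreal (\<Prod>b\<in>Basis. normal_density 0 \<sigma> (x \<bullet> b)))"
  have Xm: "X \<in> measurable M borel" using distributed_measurable[OF X] by simp
  have \<psi>m: "\<psi> \<in> measurable borel P" unfolding \<psi>_def P_def by measurable
  have \<phi>m: "\<phi> \<in> measurable P borel" unfolding \<phi>_def P_def by measurable
  have fm: "f \<in> borel_measurable borel" using distributed_borel_measurable[OF X] unfolding f_def by simp
  have lb: "lborel = distr P borel \<phi>" unfolding P_def \<phi>_def by (rule lborel_eq)
  have \<psi>\<phi>: "\<psi> (\<phi> g) = g" if "g \<in> space P" for g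
  proof -
    have ge: "g \<in> extensional Basis" using that by (simp add: P_def space_PiM PiE_def)
    show ?thesis
    proof (rule ext)
      fix b show "\<psi> (\<phi> g) b = g b"
        using ge by (auto simp: \<psi>_def \<phi>_def inner_sum_left inner_Basis if_distrib extensional_def
          cong: if_cong)
    qed
  qed
  have \<phi>b: "\<phi> g \<bullet> b = g b" if "b \<in> Basis" for g b
    using that by (simp add: \<phi>_def inner_sum_left inner_Basis if_distrib cong: if_cong)
  have "distr M P (\<lambda>\<omega>. \<psi> (X \<omega>)) = distr (distr M lborel X) P \<psi>"
    by (subst distr_distr) (use Xm \<psi>m in \<open>auto simp: comp_def\<close>)
  also have "distr M lborel X = density lborel f"
    using X unfolding f_def by (simp add: distributed_distr_eq_density)
  also have "density lborel f = distr (density P (\<lambda>g. f (\<phi> g))) borel \<phi>"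
    by (subst lb) (rule density_distr[OF fm \<phi>m])
  also have "distr (distr (density P (\<lambda>g. f (\<phi> g))) borel \<phi>) P \<psi> = distr (density P (\<lambda>g. f (\<phi> g))) P (\<psi> \<circ> \<phi>)"
    by (rule distr_distr) (use \<psi>m \<phi>m in auto)
  also have "\<dots> = distr (density P (\<lambda>g. f (\<phi> g))) P (\<lambda>x. x)"
    by (rule distr_cong) (auto simp: \<psi>\<phi>)
  also have "\<dots> = density P (\<lambda>g. f (\<phi> g))"
    by (rule distr_id2) simp
  also have "density P (\<lambda>g. f (\<phi> g)) = density P (\<lambda>g. \<Prod>b\<in>Basis. ennreal (normal_density 0 \<sigma> (g b)))"
  proof (rule density_cong)
    show "(\<lambda>g. f (\<phi> g)) \<in> borel_measurable P" using measurable_compose[OF \<phi>m fm] .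
    show "(\<lambda>g. \<Prod>b\<in>Basis. ennreal (normal_density 0 \<sigma> (g b))) \<in> borel_measurable P"
      unfolding P_def by measurable
  qed (auto simp: f_def \<phi>b prod_ennreal)
  also have "\<dots> = N" unfolding P_def N_def using PiM_density_normal[OF finite_Basis s] by simp
  finally have Dst: "distr M P (\<lambda>\<omega>. \<psi> (X \<omega>)) = N" .
  have probN: "prob_space (density lborel (\<lambda>x. ennreal (normal_density 0 \<sigma> x)))"
    by (rule prob_space_normal_density) (rule s)
  have marg: "distr M lborel (\<lambda>\<omega>. X \<omega> \<bullet> b) = density lborel (\<lambda>x. ennreal (normal_density 0 \<sigma> x))"
    if b: "b \<in> Basis" for b
  proof -
    have cm: "(\<lambda>g. g b) \<in> measurable P lborel" unfolding P_def using b by measurable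
    have "distr M lborel (\<lambda>\<omega>. X \<omega> \<bullet> b) = distr (distr M P (\<lambda>\<omega>. \<psi> (X \<omega>))) lborel (\<lambda>g. g b)"
      by (subst distr_distr) (use cm Xm \<psi>m b in \<open>auto simp: comp_def \<psi>_def\<close>)
    also have "\<dots> = distr N (density lborel (\<lambda>x. ennreal (normal_density 0 \<sigma> x))) (\<lambda>g. g b)"
      unfolding Dst by (rule distr_cong) auto
    also have "\<dots> = density lborel (\<lambda>x. ennreal (normal_density 0 \<sigma> x))"
      unfolding N_def by (rule distr_PiM_component[OF probN b])
    finally show ?thesis .
  qed
  have dist: "distributed M lborel (\<lambda>\<omega>. X \<omega> \<bullet> b) (\<lambda>x. ennreal (normal_density 0 \<sigma> x))"
    if b: "b \<in> Basis" for b
    unfolding distributed_def using marg[OF b] Xm by auto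
  have "indep_vars (\<lambda>_. lborel) (\<lambda>b \<omega>. X \<omega> \<bullet> b) Basis"
  proof (subst indep_vars_iff_distr_eq_PiM)
    show "distr M (\<Pi>\<^sub>M i\<in>Basis. lborel) (\<lambda>x. \<lambda>i\<in>Basis. X x \<bullet> i) = (\<Pi>\<^sub>M i\<in>Basis. distr M lborel (\<lambda>\<omega>. X \<omega> \<bullet> i))"
    proof -
      have "(\<Pi>\<^sub>M i\<in>Basis. distr M lborel (\<lambda>\<omega>. X \<omega> \<bullet> i)) = N"
        unfolding N_def by (rule PiM_cong) (auto simp: marg)
      moreover have "distr M (\<Pi>\<^sub>M i\<in>Basis. lborel) (\<lambda>x. \<lambda>i\<in>Basis. X x \<bullet> i) = N"
        using Dst by (simp add: P_def \<psi>_def)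
      ultimately show ?thesis by simp
    qed
  qed (use Xm in auto)
  then have "indep_vars (\<lambda>_. borel) (\<lambda>b \<omega>. (\<lambda>x. x) (X \<omega> \<bullet> b)) Basis"
    by (rule indep_vars_compose2) simp
  then show ?thesis using dist by simp
qed



lemma (in prob_space) gauss_inner:
  fixes X :: "'a \<Rightarrow> 'b::euclidean_space"
  assumes s: "0 < \<sigma>"
  and X: "distributed M lborel X (\<lambda>x. ennreal (\<Prod>b\<in>Basis. normal_density 0 \<sigma> (x \<bullet> b)))"
  and v: "v \<noteq> 0"
  shows "distributed M lborel (\<lambda>\<omega>. X \<omega> \<bullet> v) (\<lambda>x. ennreal (normal_density 0 (\<sigma> * norm v) x))"
proof -
  from gauss_coords[OF s X] have ind: "indep_vars (\<lambda>_. borel) (\<lambda>b \<omega>. X \<omega> \<bullet> b) Basis"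
    and dist: "\<And>b. b \<in> Basis \<Longrightarrow> distributed M lborel (\<lambda>\<omega>. X \<omega> \<bullet> b) (\<lambda>x. ennreal (normal_density 0 \<sigma> x))"
    by auto
  define B where "B = {b\<in>Basis. v \<bullet> b \<noteq> 0}"
  have Bsub: "B \<subseteq> Basis" and finB: "finite B" unfolding B_def by auto
  have Bne: "B \<noteq> {}"
  proof
    assume "B = {}"
    then have "\<forall>b\<in>Basis. v \<bullet> b = 0" unfolding B_def by auto
    then have "v = 0" using euclidean_all_zero_iff by blast
    with v show False by simp
  qed
  have sumB: "(\<Sum>b\<in>Basis. g b * (v \<bullet> b)) = (\<Sum>b\<in>B. g b * (v \<bullet> b))" for g :: "'b \<Rightarrow> real"
    by (rule sum.mono_neutral_right) (auto simp: B_def)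
  have eqf: "(\<lambda>\<omega>. X \<omega> \<bullet> v) = (\<lambda>\<omega>. \<Sum>b\<in>B. (v \<bullet> b) * (X \<omega> \<bullet> b))"
  proof
    fix \<omega>
    have "X \<omega> \<bullet> v = (\<Sum>b\<in>Basis. (X \<omega> \<bullet> b) * (v \<bullet> b))" by (rule euclidean_inner)
    also have "\<dots> = (\<Sum>b\<in>B. (X \<omega> \<bullet> b) * (v \<bullet> b))" by (rule sumB)
    finally show "X \<omega> \<bullet> v = (\<Sum>b\<in>B. (v \<bullet> b) * (X \<omega> \<bullet> b))" by (simp add: ac_simps)
  qed
  have indB: "indep_vars (\<lambda>_. borel) (\<lambda>b \<omega>. (v \<bullet> b) * (X \<omega> \<bullet> b)) B"
    using indep_vars_compose2[OF indep_vars_subset[OF ind Bsub], of "\<lambda>b x. (v \<bullet> b) * x" "\<lambda>_. borel"]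
    by simp
  have distB: "distributed M lborel (\<lambda>\<omega>. (v \<bullet> b) * (X \<omega> \<bullet> b)) (\<lambda>x. ennreal (normal_density 0 (\<bar>v \<bullet> b\<bar> * \<sigma>) x))"
    if b: "b \<in> B" for b
  proof -
    have "v \<bullet> b \<noteq> 0" using b by (simp add: B_def)
    from normal_density_affine[OF dist[of b] s this, of 0] b Bsub
    show ?thesis by auto
  qed
  have pos: "0 < \<bar>v \<bullet> b\<bar> * \<sigma>" if "b \<in> B" for b using that s by (simp add: B_def)
  have S: "distributed M lborel (\<lambda>\<omega>. \<Sum>b\<in>B. (v \<bullet> b) * (X \<omega> \<bullet> b))
      (\<lambda>x. ennreal (normal_density (\<Sum>b\<in>B. 0) (sqrt (\<Sum>b\<in>B. (\<bar>v \<bullet> b\<bar> * \<sigma>)\<^sup>2)) x))"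
    by (rule sum_indep_normal[OF finB Bne indB pos distB])
  have "(\<Sum>b\<in>B. (\<bar>v \<bullet> b\<bar> * \<sigma>)\<^sup>2) = \<sigma>\<^sup>2 * (\<Sum>b\<in>B. (v \<bullet> b) * (v \<bullet> b))"
    by (simp add: sum_distrib_left power_mult_distrib power2_eq_square ac_simps)
  also have "(\<Sum>b\<in>B. (v \<bullet> b) * (v \<bullet> b)) = v \<bullet> v"
    using sumB[of "\<lambda>b. v \<bullet> b"] euclidean_inner[of v v] by simp
  also have "v \<bullet> v = (norm v)\<^sup>2" by (simp add: power2_norm_eq_inner)
  finally have "sqrt (\<Sum>b\<in>B. (\<bar>v \<bullet> b\<bar> * \<sigma>)\<^sup>2) = \<sigma> * norm v"
    using s by (simp add: real_sqrt_mult)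
  then show ?thesis using S eqf by simp
qed



lemma norm_smult_cvec:
  fixes c :: complex and x :: "complex^'d"
  shows "norm (c *s x) = cmod c * norm x"
  unfolding norm_vec_def by (simp add: L2_set_right_distrib norm_mult)

lemma norm_cvec: "norm (cvec v) = norm v"
  unfolding norm_vec_def cvec_def by simp

lemma cvec_diff: "cvec (a - b) = cvec a - cvec b"
  unfolding cvec_def by (simp add: vec_eq_iff)

lemma cgauss_prod:
  fixes x :: "complex^'d" assumes s: "0 < s"
  shows "cgauss_density s x = (\<Prod>b\<in>Basis. normal_density 0 (s / sqrt 2) (x \<bullet> b))"
proof -
  have nd: "normal_density 0 (s / sqrt 2) y = 1 / sqrt (pi * s\<^sup>2) * exp (- (y\<^sup>2 / s\<^sup>2))" for y
    unfolding normal_density_def by (simp add: power_divide)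
  have "(\<Prod>b\<in>Basis. normal_density 0 (s / sqrt 2) (x \<bullet> b))
      = (\<Prod>b\<in>(Basis::(complex^'d) set). 1 / sqrt (pi * s\<^sup>2)) * (\<Prod>b\<in>Basis. exp (- ((x \<bullet> b)\<^sup>2 / s\<^sup>2)))"
    unfolding nd by (rule prod.distrib)
  also have "(\<Prod>b\<in>(Basis::(complex^'d) set). 1 / sqrt (pi * s\<^sup>2)) = (1 / sqrt (pi * s\<^sup>2)) ^ card (Basis :: (complex^'d) set)"
    by (rule prod_constant)
  also have "(\<Prod>b\<in>Basis. exp (- ((x \<bullet> b)\<^sup>2 / s\<^sup>2))) = exp (- (\<Sum>b\<in>Basis. (x \<bullet> b)\<^sup>2 / s\<^sup>2))"
    by (subst sum_negf[symmetric], subst exp_sum) auto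
  also have "card (Basis :: (complex^'d) set) = 2 * CARD('d)" by simp
  also have "(1 / sqrt (pi * s\<^sup>2)) ^ (2 * CARD('d)) = (1 / (pi * s\<^sup>2)) ^ CARD('d)"
    by (simp add: power_mult power_divide)
  also have "(\<Sum>b\<in>Basis. (x \<bullet> b)\<^sup>2 / s\<^sup>2) = (norm x)\<^sup>2 / s\<^sup>2"
  proof -
    have "(\<Sum>b\<in>Basis. (x \<bullet> b)\<^sup>2) = x \<bullet> x" by (simp add: euclidean_inner[of x x] power2_eq_square)
    also have "\<dots> = (norm x)\<^sup>2" by (simp add: power2_norm_eq_inner)
    finally show ?thesis by (simp add: sum_divide_distrib[symmetric])
  qed
  finally show ?thesis unfolding cgauss_density_def by simp
qed

lemma (in prob_space) final_bound:
  fixes W :: "'a \<Rightarrow> real"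
  assumes W: "distributed M lborel W (\<lambda>x. ennreal (normal_density 0 \<sigma> x))"
    and s: "0 < \<sigma>" and sS: "\<sigma>\<^sup>2 = 2 * S"
    and q: "sqrt S < sqrt (eps + c\<^sup>2) - c" and c: "0 < c" "Cfun c = 1 / \<delta>" and d: "0 < \<delta>"
  shows "1 - \<delta> \<le> measure M {\<omega>\<in>space M. \<bar>S + W \<omega>\<bar> \<le> eps}"
proof -
  have S0: "0 < S" using sS s by (smt (verit) zero_less_power)
  have sqS: "0 < sqrt S" using S0 by simp
  define a where "a = eps - S"
  have "sqrt S + c < sqrt (eps + c\<^sup>2)" using q by simp
  then have "(sqrt S + c)\<^sup>2 < (sqrt (eps + c\<^sup>2))\<^sup>2"
    using sqS c by (intro power_strict_mono) auto
  moreover have "0 \<le> eps + c\<^sup>2" using q sqS c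
    by (smt (verit) real_sqrt_less_iff real_sqrt_zero zero_le_power2 real_sqrt_lt_0_iff)
  ultimately have "S + 2 * sqrt S * c + c\<^sup>2 < eps + c\<^sup>2"
    using S0 by (simp add: power2_sum)
  then have a2': "2 * sqrt S * c < a" unfolding a_def by simp
  then have a2: "2 * c * sqrt S < a" by (simp add: mult.commute mult.left_commute)
  then have a0: "0 < a" using c sqS by (smt (verit) mult_pos_pos)
  define u where "u = a / (2 * sqrt S)"
  have uc: "c < u" unfolding u_def using a2 sqS by (simp add: field_simps)
  have Wm[measurable]: "W \<in> borel_measurable M" using distributed_measurable[OF W] by simp
  have tail: "measure M (V -` {a<..} \<inter> space M) \<le> \<sigma>\<^sup>2 / a * normal_density 0 \<sigma> a"
    if V: "distributed M lborel V (\<lambda>x. ennreal (normal_density 0 \<sigma> x))" for V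
  proof -
    have "ennreal (measure M (V -` {a<..} \<inter> space M)) = emeasure M (V -` {a<..} \<inter> space M)"
      by (simp add: emeasure_eq_measure)
    also have "\<dots> = (\<integral>\<^sup>+x. ennreal (normal_density 0 \<sigma> x) * indicator {a<..} x \<partial>lborel)"
      by (rule distributed_emeasure[OF V]) simp
    also have "\<dots> \<le> ennreal (\<sigma>\<^sup>2 / a * normal_density 0 \<sigma> a)"
      by (rule normal_tail_bound[OF s a0])
    finally show ?thesis using a0 by (subst (asm) ennreal_le_iff) auto
  qed
  have Wn: "distributed M lborel (\<lambda>\<omega>. - W \<omega>) (\<lambda>x. ennreal (normal_density 0 \<sigma> x))"
    using normal_density_affine[OF W s, of "-1" 0] by simp
  have t1: "measure M (W -` {a<..} \<inter> space M) \<le> \<sigma>\<^sup>2 / a * normal_density 0 \<sigma> a" by (rule tail[OF W])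
  have t2: "measure M ((\<lambda>\<omega>. - W \<omega>) -` {a<..} \<inter> space M) \<le> \<sigma>\<^sup>2 / a * normal_density 0 \<sigma> a"
    by (rule tail[OF Wn])
  have eqC: "2 * (\<sigma>\<^sup>2 / a * normal_density 0 \<sigma> a) = 1 / Cfun u"
  proof -
    have "sqrt (2 * pi * \<sigma>\<^sup>2) = 2 * sqrt pi * sqrt S" using sS
      by (simp add: real_sqrt_mult)
    moreover have "a\<^sup>2 / (2 * \<sigma>\<^sup>2) = u\<^sup>2" using sS S0 unfolding u_def
      by (simp add: power_divide power_mult_distrib)
    ultimately show ?thesis unfolding normal_density_def Cfun_def u_def using sS sqS a0
      by (simp add: field_simps exp_minus)
  qed
  have Cu: "1 / Cfun u < \<delta>"
  proof -
    have "Cfun c < Cfun u" by (rule Cfun_strict_mono[OF c(1) uc])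
    then have "1 / \<delta> < Cfun u" using c by simp
    moreover have "0 < Cfun u" unfolding Cfun_def using uc c by simp
    ultimately show ?thesis using d by (simp add: field_simps)
  qed
  let ?G = "{\<omega>\<in>space M. \<bar>S + W \<omega>\<bar> \<le> eps}"
  have Gm: "?G \<in> events" by measurable
  have sub: "space M - ?G \<subseteq> (W -` {a<..} \<inter> space M) \<union> ((\<lambda>\<omega>. - W \<omega>) -` {a<..} \<inter> space M)"
    using S0 unfolding a_def by auto
  have "prob (space M - ?G) \<le> prob ((W -` {a<..} \<inter> space M) \<union> ((\<lambda>\<omega>. - W \<omega>) -` {a<..} \<inter> space M))"
    by (rule finite_measure_mono[OF sub]) measurable
  also have "\<dots> \<le> prob (W -` {a<..} \<inter> space M) + prob ((\<lambda>\<omega>. - W \<omega>) -` {a<..} \<inter> space M)"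
    by (rule measure_Un_le) measurable
  also have "\<dots> < \<delta>" using t1 t2 eqC Cu by linarith
  finally have "prob (space M - ?G) < \<delta>" .
  then show ?thesis using prob_compl[OF Gm] by simp
qed



lemma norm_add_sq: fixes a b :: "'a::real_inner"
  shows "(norm (a + b))\<^sup>2 = (norm a)\<^sup>2 + 2 * (a \<bullet> b) + (norm b)\<^sup>2"
  by (simp add: power2_norm_eq_inner inner_add_left inner_add_right inner_commute)

lemma cvec_add: "cvec (a + b) = cvec a + cvec b"
  unfolding cvec_def by (simp add: vec_eq_iff)

lemma loss_ratio:
  fixes x d :: "complex^'d" assumes s: "0 < s"
  shows "cgauss_density s x / cgauss_density s (x + d) = exp (((norm d)\<^sup>2 + 2 * (x \<bullet> d)) / s\<^sup>2)"
proof -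
  have K: "0 < (1 / (pi * s\<^sup>2)) ^ CARD('d)" using s by simp
  have "cgauss_density s x / cgauss_density s (x + d) = exp (- (norm x)\<^sup>2 / s\<^sup>2) / exp (- (norm (x + d))\<^sup>2 / s\<^sup>2)"
    unfolding cgauss_density_def using K s by simp
  also have "\<dots> = exp (- (norm x)\<^sup>2 / s\<^sup>2 - (- (norm (x + d))\<^sup>2 / s\<^sup>2))" by (rule exp_diff[symmetric])
  also have "- (norm x)\<^sup>2 / s\<^sup>2 - (- (norm (x + d))\<^sup>2 / s\<^sup>2) = ((norm d)\<^sup>2 + 2 * (x \<bullet> d)) / s\<^sup>2"
    unfolding norm_add_sq using s by (simp add: field_simps)
  finally show ?thesis .
qed

theorem theorem1:
  fixes M :: "'w measure" and T D :: nat
    and h g :: "nat \<Rightarrow> 'k::finite \<Rightarrow> complex"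
    and eta :: "nat \<Rightarrow> real"
    and R :: "nat \<Rightarrow> 'k \<Rightarrow> 'k \<Rightarrow> complex" and Na :: real
    and w :: "nat \<Rightarrow> real^'d::finite"
    and gradf :: "real^'d \<Rightarrow> 'z \<Rightarrow> real^'d"
    and gamma :: "nat \<Rightarrow> real"
    and r :: "nat \<Rightarrow> 'w \<Rightarrow> complex^'d"
    and eps delta :: real
  assumes "prob_space M"
    and "\<forall>t\<in>{1..T}. \<forall>k. h t k \<noteq> 0"
    and "\<forall>t\<in>{1..T}. 0 < eta t"
    and "0 < Na"
    and "\<forall>t\<in>{1..T}. psd_matrix (R t) \<and> (\<Sum>k\<in>UNIV. \<Sum>j\<in>UNIV. R t k j) = 0"
    and "\<forall>t\<in>{1..T}. distributed M lborel (r t)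
            (\<lambda>x. ennreal (cgauss_density (eff_std (eta t) (ch_ratio g h t) (R t) Na) x))"
    and "prob_space.indep_vars M (\<lambda>_. borel) r {1..T}"
    and "\<forall>t\<in>{1..T}. \<forall>z. norm (gradf (w t) z) \<le> gamma t"
    and "0 \<le> eps" and "0 < delta" and "delta \<le> 1"
    and "(\<Sum>t=1..T. (2 * gamma t / eff_std (eta t) (ch_ratio g h t) (R t) Na
            * sqrt (eta t) * rho_max (ch_ratio g h t))\<^sup>2) < R_dp eps delta"
  shows "ota_dp M T D (\<lambda>t. eff_std (eta t) (ch_ratio g h t) (R t) Na) r
           (\<lambda>t Ds. adv_mean (eta t) (ch_ratio g h t) gradf (w t) Ds) eps delta"
proof -
  interpret P: prob_space M by (rule assms(1))
  note eta_pos = assms(3) and Na_pos = assms(4) and psd = assms(5) and rdist = assms(6)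
    and indep = assms(7) and gbound = assms(8) and eps0 = assms(9) and d0 = assms(10)
    and d1 = assms(11) and hyp = assms(12)
  define \<rho> where "\<rho> = ch_ratio g h"
  define m where "m = (\<lambda>t. eff_std (eta t) (\<rho> t) (R t) Na)"
  have mpos: "0 < m t" if t: "t \<in> {1..T}" for t
  proof -
    have "psd_matrix (R t)" using psd t by auto
    then have H: "\<forall>v::'k\<Rightarrow>complex. 0 \<le> Re (\<Sum>k\<in>UNIV. \<Sum>j\<in>UNIV. cnj (v k) * R t k j * v j)"
      unfolding psd_matrix_def by blast
    have "0 \<le> Re (\<Sum>k\<in>UNIV. \<Sum>j\<in>UNIV. cnj (cnj (\<rho> t k)) * R t k j * cnj (\<rho> t j))"
      using H[rule_format, of "\<lambda>k. cnj (\<rho> t k)"] by simp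
    then have "0 \<le> Re (quad_form (\<rho> t) (R t))" unfolding quad_form_def by simp
    moreover have "0 < eta t" using eta_pos t by auto
    ultimately have "0 \<le> eta t * Re (quad_form (\<rho> t) (R t))" by simp
    then show ?thesis unfolding m_def eff_std_def using Na_pos by simp
  qed
  have main: "1 - delta \<le> measure M {\<omega> \<in> space M.
      \<bar>privacy_loss T m (\<lambda>t. adv_mean (eta t) (\<rho> t) gradf (w t) Ds) (\<lambda>t. adv_mean (eta t) (\<rho> t) gradf (w t) Ds')
        (\<lambda>t. adv_mean (eta t) (\<rho> t) gradf (w t) Ds + r t \<omega>)\<bar> \<le> eps}"
    if nb: "neighboring D Ds Ds'" for Ds Ds'
  proof -
    from nb obtain l M0 s0 s0' where oth: "\<forall>k. k \<noteq> l \<longrightarrow> Ds k = Ds' k"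
      and Dl: "Ds l = add_mset s0 M0" "Ds' l = add_mset s0' M0"
      unfolding neighboring_def by blast
    define mu where "mu = (\<lambda>t. adv_mean (eta t) (\<rho> t) gradf (w t) Ds)"
    define mu' where "mu' = (\<lambda>t. adv_mean (eta t) (\<rho> t) gradf (w t) Ds')"
    define \<Delta> where "\<Delta> = (\<lambda>t. mu t - mu' t)"
    have \<Delta>eq: "\<Delta> t = complex_of_real (sqrt (eta t)) *s (\<rho> t l *s cvec (gradf (w t) s0 - gradf (w t) s0'))" for t
    proof -
      let ?F = "\<lambda>Ds k. \<rho> t k *s cvec (local_grad gradf (w t) (Ds k))"
      have A: "(\<Sum>k\<in>UNIV. ?F Ds k) = ?F Ds l + (\<Sum>k\<in>UNIV - {l}. ?F Ds k)"
        by (rule sum.remove) auto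
      have B: "(\<Sum>k\<in>UNIV. ?F Ds' k) = ?F Ds' l + (\<Sum>k\<in>UNIV - {l}. ?F Ds' k)"
        by (rule sum.remove) auto
      have C: "(\<Sum>k\<in>UNIV - {l}. ?F Ds k) = (\<Sum>k\<in>UNIV - {l}. ?F Ds' k)"
        using oth by (intro sum.cong) auto
      have "(\<Sum>k\<in>UNIV. ?F Ds k) - (\<Sum>k\<in>UNIV. ?F Ds' k) = ?F Ds l - ?F Ds' l"
        unfolding A B C by simp
      also have "\<dots> = \<rho> t l *s cvec (gradf (w t) s0 - gradf (w t) s0')"
        unfolding Dl local_grad_def by (simp add: cvec_add cvec_diff vector_ssub_ldistrib vector_add_ldistrib)
      finally show ?thesis
        unfolding \<Delta>_def mu_def mu'_def adv_mean_def by (simp add: vector_ssub_ldistrib[symmetric])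
    qed
    have rhomax: "cmod (\<rho> t l) \<le> rho_max (\<rho> t)" for t
      unfolding rho_max_def by (rule Max_ge) auto
    have \<Delta>bound: "norm (\<Delta> t) \<le> 2 * gamma t * sqrt (eta t) * rho_max (\<rho> t)" if t: "t \<in> {1..T}" for t
    proof -
      have et: "0 < eta t" using eta_pos t by auto
      have n1: "norm (\<Delta> t) = sqrt (eta t) * (cmod (\<rho> t l) * norm (gradf (w t) s0 - gradf (w t) s0'))"
        unfolding \<Delta>eq norm_smult_cvec norm_cvec using et by simp
      have g1: "norm (gradf (w t) s0) \<le> gamma t" "norm (gradf (w t) s0') \<le> gamma t"
        using gbound t by auto
      have n2: "norm (gradf (w t) s0 - gradf (w t) s0') \<le> 2 * gamma t"
        using norm_triangle_ineq4[of "gradf (w t) s0" "gradf (w t) s0'"] g1 by linarith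
      then have "cmod (\<rho> t l) * norm (gradf (w t) s0 - gradf (w t) s0') \<le> rho_max (\<rho> t) * (2 * gamma t)"
        using rhomax[of t] order.trans[OF norm_ge_zero rhomax[of t]] by (intro mult_mono) auto
      then have "sqrt (eta t) * (cmod (\<rho> t l) * norm (gradf (w t) s0 - gradf (w t) s0'))
          \<le> sqrt (eta t) * (rho_max (\<rho> t) * (2 * gamma t))"
        using et by (intro mult_left_mono) auto
      then show ?thesis unfolding n1 by (simp add: ac_simps)
    qed
    define S where "S = (\<Sum>t\<in>{1..T}. (norm (\<Delta> t))\<^sup>2 / (m t)\<^sup>2)"
    have S0: "0 \<le> S" unfolding S_def by (intro sum_nonneg) auto
    have Sb: "S < R_dp eps delta"
    proof -
      have "S \<le> (\<Sum>t=1..T. (2 * gamma t / m t * sqrt (eta t) * rho_max (\<rho> t))\<^sup>2)"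
        unfolding S_def
      proof (intro sum_mono)
        fix t assume t: "t \<in> {1..T}"
        have "norm (\<Delta> t) / m t \<le> 2 * gamma t / m t * sqrt (eta t) * rho_max (\<rho> t)"
          using \<Delta>bound[OF t] mpos[OF t] by (simp add: divide_right_mono field_simps)
        then have "(norm (\<Delta> t) / m t)\<^sup>2 \<le> (2 * gamma t / m t * sqrt (eta t) * rho_max (\<rho> t))\<^sup>2"
          using mpos[OF t] by (intro power_mono) auto
        then show "(norm (\<Delta> t))\<^sup>2 / (m t)\<^sup>2 \<le> (2 * gamma t / m t * sqrt (eta t) * rho_max (\<rho> t))\<^sup>2"
          by (simp add: power_divide)
      qed
      also have "\<dots> < R_dp eps delta" using hyp unfolding m_def \<rho>_def by simp
      finally show ?thesis .
    qed
    have Lform: "privacy_loss T m mu mu' (\<lambda>t. mu t + r t \<omega>) = S + (\<Sum>t\<in>{1..T}. 2 / (m t)\<^sup>2 * (r t \<omega> \<bullet> \<Delta> t))" for \<omega>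
    proof -
      have "(\<Prod>t\<in>{1..T}. cgauss_density (m t) (mu t + r t \<omega> - mu t) / cgauss_density (m t) (mu t + r t \<omega> - mu' t))
          = (\<Prod>t\<in>{1..T}. exp (((norm (\<Delta> t))\<^sup>2 + 2 * (r t \<omega> \<bullet> \<Delta> t)) / (m t)\<^sup>2))"
      proof (intro prod.cong refl)
        fix t assume t: "t \<in> {1..T}"
        have e1: "mu t + r t \<omega> - mu t = r t \<omega>" by simp
        have e2: "mu t + r t \<omega> - mu' t = r t \<omega> + \<Delta> t" unfolding \<Delta>_def by (simp add: algebra_simps)
        show "cgauss_density (m t) (mu t + r t \<omega> - mu t) / cgauss_density (m t) (mu t + r t \<omega> - mu' t)
          = exp (((norm (\<Delta> t))\<^sup>2 + 2 * (r t \<omega> \<bullet> \<Delta> t)) / (m t)\<^sup>2)"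
          unfolding e1 e2 by (rule loss_ratio[OF mpos[OF t]])
      qed
      also have "\<dots> = exp (\<Sum>t\<in>{1..T}. ((norm (\<Delta> t))\<^sup>2 + 2 * (r t \<omega> \<bullet> \<Delta> t)) / (m t)\<^sup>2)"
        by (simp add: exp_sum)
      finally have "privacy_loss T m mu mu' (\<lambda>t. mu t + r t \<omega>)
          = (\<Sum>t\<in>{1..T}. ((norm (\<Delta> t))\<^sup>2 + 2 * (r t \<omega> \<bullet> \<Delta> t)) / (m t)\<^sup>2)"
        unfolding privacy_loss_def by simp
      also have "\<dots> = S + (\<Sum>t\<in>{1..T}. 2 / (m t)\<^sup>2 * (r t \<omega> \<bullet> \<Delta> t))"
        unfolding S_def by (simp add: sum.distrib[symmetric] add_divide_distrib)
      finally show ?thesis .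
    qed
    define J where "J = {t\<in>{1..T}. \<Delta> t \<noteq> 0}"
    have Jsub: "J \<subseteq> {1..T}" and finJ: "finite J" unfolding J_def by auto
    have sumJ: "(\<Sum>t\<in>{1..T}. 2 / (m t)\<^sup>2 * (r t \<omega> \<bullet> \<Delta> t)) = (\<Sum>t\<in>J. 2 / (m t)\<^sup>2 * (r t \<omega> \<bullet> \<Delta> t))" for \<omega>
      by (rule sum.mono_neutral_right) (auto simp: J_def)
    have SJ: "S = (\<Sum>t\<in>J. (norm (\<Delta> t))\<^sup>2 / (m t)\<^sup>2)"
      unfolding S_def by (rule sum.mono_neutral_right) (auto simp: J_def)
    show ?thesis
    proof (cases "J = {}")
      case True
      then have "S = 0" using SJ by simp
      moreover have "(\<Sum>t\<in>J. 2 / (m t)\<^sup>2 * (r t \<omega> \<bullet> \<Delta> t)) = 0" for \<omega> using True by simp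
      ultimately have "{\<omega> \<in> space M. \<bar>privacy_loss T m mu mu' (\<lambda>t. mu t + r t \<omega>)\<bar> \<le> eps} = space M"
        using Lform sumJ eps0 by auto
      then show ?thesis using d0 unfolding mu_def mu'_def by (simp add: P.prob_space)
    next
      case False
      define \<sigma>t where "\<sigma>t = (\<lambda>t. 2 / (m t)\<^sup>2 * (m t / sqrt 2 * norm (\<Delta> t)))"
      have \<sigma>tpos: "0 < \<sigma>t t" if "t \<in> J" for t
        using that mpos[of t] Jsub unfolding \<sigma>t_def J_def by auto
      have Xd: "distributed M lborel (\<lambda>\<omega>. 2 / (m t)\<^sup>2 * (r t \<omega> \<bullet> \<Delta> t)) (\<lambda>x. ennreal (normal_density 0 (\<sigma>t t) x))"
        if t: "t \<in> J" for t
      proof -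
        have tT: "t \<in> {1..T}" and dn: "\<Delta> t \<noteq> 0" using t Jsub unfolding J_def by auto
        have mp: "0 < m t / sqrt 2" using mpos[OF tT] by simp
        have "distributed M lborel (r t) (\<lambda>x. ennreal (cgauss_density (m t) x))"
          using rdist tT unfolding m_def \<rho>_def by auto
        then have "distributed M lborel (r t) (\<lambda>x. ennreal (\<Prod>b\<in>Basis. normal_density 0 (m t / sqrt 2) (x \<bullet> b)))"
        proof -
          have eqf: "(\<lambda>x. ennreal (cgauss_density (m t) x)) = (\<lambda>x. ennreal (\<Prod>b\<in>Basis. normal_density 0 (m t / sqrt 2) (x \<bullet> b)))"
            by (rule ext, rule arg_cong[where f=ennreal], rule cgauss_prod[OF mpos[OF tT]])
          show ?thesis using \<open>distributed M lborel (r t) (\<lambda>x. ennreal (cgauss_density (m t) x))\<close> unfolding eqf .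
        qed
        from P.gauss_inner[OF mp this dn]
        have "distributed M lborel (\<lambda>\<omega>. r t \<omega> \<bullet> \<Delta> t) (\<lambda>x. ennreal (normal_density 0 (m t / sqrt 2 * norm (\<Delta> t)) x))" .
        from P.normal_density_affine[OF this _, of "2 / (m t)\<^sup>2" 0]
        show ?thesis using mp dn mpos[OF tT] unfolding \<sigma>t_def by (simp add: mult_pos_pos)
      qed
      have indJ: "P.indep_vars (\<lambda>_. borel) (\<lambda>t \<omega>. 2 / (m t)\<^sup>2 * (r t \<omega> \<bullet> \<Delta> t)) J"
        using P.indep_vars_compose2[OF P.indep_vars_subset[OF indep Jsub], of "\<lambda>t x. 2 / (m t)\<^sup>2 * (x \<bullet> \<Delta> t)" "\<lambda>_. borel"]
        by simp
      define W where "W = (\<lambda>\<omega>. \<Sum>t\<in>J. 2 / (m t)\<^sup>2 * (r t \<omega> \<bullet> \<Delta> t))"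
      define \<sigma> where "\<sigma> = sqrt (\<Sum>t\<in>J. (\<sigma>t t)\<^sup>2)"
      have Wd: "distributed M lborel W (\<lambda>x. ennreal (normal_density 0 \<sigma> x))"
        using P.sum_indep_normal[OF finJ False indJ \<sigma>tpos Xd] unfolding W_def \<sigma>_def by simp
      have \<sigma>pos: "0 < \<sigma>" unfolding \<sigma>_def using False finJ \<sigma>tpos
        by (intro real_sqrt_gt_zero sum_pos) (auto dest!: \<sigma>tpos)
      have sq: "(\<sigma>t t)\<^sup>2 = 2 * ((norm (\<Delta> t))\<^sup>2 / (m t)\<^sup>2)" if "t \<in> J" for t
        using mpos[of t] that Jsub unfolding \<sigma>t_def by (auto simp: field_simps power2_eq_square)
      have \<sigma>S: "\<sigma>\<^sup>2 = 2 * S"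
        unfolding \<sigma>_def SJ using sq by (simp add: sum_nonneg sum_distrib_left)
      define c where "c = Cinv (1 / delta)"
      have cprop: "0 < c" "Cfun c = 1 / delta" using Cinv_prop[of "1 / delta"] d0 d1 unfolding c_def by auto
      have q0: "0 \<le> sqrt (eps + c\<^sup>2) - c"
        using eps0 cprop real_sqrt_le_mono[of "c\<^sup>2" "eps + c\<^sup>2"] by simp
      have "sqrt S < sqrt ((sqrt (eps + c\<^sup>2) - c)\<^sup>2)"
        using Sb unfolding R_dp_def c_def[symmetric] by (intro real_sqrt_less_mono) simp
      then have q: "sqrt S < sqrt (eps + c\<^sup>2) - c" using q0 by simp
      have "1 - delta \<le> measure M {\<omega> \<in> space M. \<bar>S + W \<omega>\<bar> \<le> eps}"
        by (rule P.final_bound[OF Wd \<sigma>pos \<sigma>S q cprop d0])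
      also have "{\<omega> \<in> space M. \<bar>S + W \<omega>\<bar> \<le> eps}
          = {\<omega> \<in> space M. \<bar>privacy_loss T m mu mu' (\<lambda>t. mu t + r t \<omega>)\<bar> \<le> eps}"
        unfolding W_def using Lform sumJ by simp
      finally show ?thesis unfolding mu_def mu'_def .
    qed
  qed
  show ?thesis unfolding ota_dp_def
    using main unfolding m_def \<rho>_def by blast
qed


end
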